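(* Let $\mathbf d=(d_1,\ldots,d_n)$ be positive integers and let $\tilde{\mathcal H}=V\left(\left(\prod_{i=1}^n(x_i+1)\right)-1\right)\subset\mathbb{C}^n$. Then the $\mathbf d$-osculants of $\tilde{\mathcal H}$ are in bijection with the primitive $\mathbf d$-necklaces.
   Context: $|\mathbf d|=\sum d_i$. A $\mathbf d$-parametrization is a polynomial map $\mathbf x(t)=(x_1(t),\ldots,x_n(t))$ with $x_i\in\mathbb{C}[t]$ of degree $d_i$ and $\mathbf x(0)=\mathbf 0$; it is $1$-fold if generically one-to-one onto its image. A $\mathbf d$-osculant of $V(f)$ is a curve which is the image of a $1$-fold $\mathbf d$-parametrization with $f(\mathbf x(t))\equiv0\pmod{t^{|\mathbf d|}}$ (counted as distinct image curves). A $\mathbf d$-necklace is a circular arrangement of $|\mathbf d|$ beads with $d_i$ of color $i$, modulo rotation; it is primitive if its rotation orbit has $|\mathbf d|$ elements. *)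

theory Defs
  imports "HOL-Computational_Algebra.Polynomial"
begin

text \<open>A multidegree d = (d_1,...,d_n) is a list of naturals; colours/coordinates
  are indexed 0..n-1. A point of C^n is a list of length n.\<close>

definition dsize :: "nat list \<Rightarrow> nat" where
  "dsize d = sum_list d"

definition is_dparam :: "nat list \<Rightarrow> complex poly list \<Rightarrow> bool" where
  "is_dparam d xs \<longleftrightarrow> length xs = length d \<and>
     (\<forall>i < length d. degree (xs ! i) = d ! i \<and> poly (xs ! i) 0 = 0)"

definition param_eval :: "complex poly list \<Rightarrow> complex \<Rightarrow> complex list" where
  "param_eval xs t = map (\<lambda>p. poly p t) xs"

definition one_fold :: "complex poly list \<Rightarrow> bool" where
  "one_fold xs \<longleftrightarrow> (\<exists>S. finite S \<and>
     (\<forall>t s. t \<notin> S \<longrightarrow> param_eval xs s = param_eval xs t \<longrightarrow> s = t))"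

definition H_comp :: "complex poly list \<Rightarrow> complex poly" where
  "H_comp xs = prod_list (map (\<lambda>p. p + 1) xs) - 1"

definition param_image :: "complex poly list \<Rightarrow> complex list set" where
  "param_image xs = range (param_eval xs)"

definition H_osculants :: "nat list \<Rightarrow> complex list set set" where
  "H_osculants d = {param_image xs | xs. is_dparam d xs \<and> one_fold xs \<and>
                     monom 1 (dsize d) dvd H_comp xs}"

definition is_dword :: "nat list \<Rightarrow> nat list \<Rightarrow> bool" where
  "is_dword d w \<longleftrightarrow> length w = dsize d \<and> set w \<subseteq> {..<length d} \<and>
     (\<forall>i < length d. count_list w i = d ! i)"

definition rot_orbit :: "'a list \<Rightarrow> 'a list set" where
  "rot_orbit w = {rotate k w | k. True}"

definition primitive_necklaces :: "nat list \<Rightarrow> nat list set set" where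
  "primitive_necklaces d = {rot_orbit w | w. is_dword d w \<and> card (rot_orbit w) = dsize d}"

end

theory Submission
  imports Defs
begin


lemma prod_list_map_nth: "prod_list (map f xs) = (\<Prod>i<length xs. f (xs!i))"
  by (simp add: prod.list_conv_set_nth atLeast0LessThan)

lemma count_list_card: "count_list xs y = card {i. i < length xs \<and> xs!i = y}"
  by (simp add: count_list_eq_length_filter length_filter_conv_card eq_commute)

lemma card_filter_sum: "card {k. k < (m::nat) \<and> P k} = (\<Sum>k<m. if P k then 1 else 0)"
proof (induction m)
  case (Suc m)
  have "{k. k < Suc m \<and> P k} = (if P m then insert m {k. k<m \<and> P k} else {k. k<m \<and> P k})"
    by (auto simp: less_Suc_eq)
  thus ?case using Suc by simp
qed simp

lemma poly_eq_by_roots: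
  fixes p q :: "complex poly"
  assumes "finite A" "\<forall>a\<in>A. poly p a = 0" "\<forall>a\<in>A. poly q a = 0"
    "card A = degree p" "degree q = degree p" "poly p 0 = poly q 0" "poly p 0 \<noteq> 0"
  shows "p = q"
proof (rule ccontr)
  assume "p \<noteq> q"
  hence nz: "p - q \<noteq> 0" by simp
  have sub: "insert 0 A \<subseteq> {x. poly (p - q) x = 0}" using assms by auto
  have "0 \<notin> A" using assms by auto
  hence "card (insert 0 A) = Suc (degree p)" using assms by simp
  hence "Suc (degree p) \<le> card {x. poly (p-q) x = 0}"
    by (metis card_mono poly_roots_finite nz sub)
  also have "\<dots> \<le> degree (p - q)" by (rule card_poly_roots_bound[OF nz])
  also have "\<dots> \<le> degree p" using degree_diff_le_max[of p q] assms by simp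
  finally show False by simp
qed

lemma sum_eq_le_imp_eq:
  fixes f g :: "nat \<Rightarrow> nat"
  assumes "finite A" "\<forall>x\<in>A. f x \<le> g x" "sum g A \<le> sum f A" "x \<in> A"
  shows "f x = g x"
proof (rule ccontr)
  assume "f x \<noteq> g x"
  hence "f x < g x" using assms by force
  hence "sum f A < sum g A" using assms by (intro sum_strict_mono_ex1) auto
  thus False using assms by simp
qed

locale osc =
  fixes d :: "nat list"
  assumes dne: "d \<noteq> []" and dpos: "\<forall>i<length d. d!i > 0"
begin

abbreviation "n \<equiv> length d"
definition "N = dsize d"
definition "\<zeta> = cis (2*pi / real N)"

lemma N_sum: "N = (\<Sum>i<n. d!i)"
  by (simp add: N_def dsize_def sum_list_sum_nth atLeast0LessThan)

lemma n_pos: "n > 0" using dne by simp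

lemma N_pos: "N > 0"
proof -
  have "d!0 > 0" using dpos n_pos by simp
  moreover have "d!0 \<le> N" unfolding N_sum using n_pos
    by (intro member_le_sum) auto
  ultimately show ?thesis by simp
qed

lemma zeta_pow: "\<zeta>^k = cis (2*pi*real k/real N)"
  by (simp add: \<zeta>_def DeMoivre mult_ac)

lemma zeta_N: "\<zeta>^N = 1"
proof -
  have "\<zeta>^N = cis (2*pi)" using N_pos by (simp add: zeta_pow)
  thus ?thesis by (simp add: complex_eq_iff)
qed

lemma zeta_nz: "\<zeta> \<noteq> 0" by (simp add: \<zeta>_def)

lemma zeta_inj: "a < N \<Longrightarrow> b < N \<Longrightarrow> \<zeta>^a = \<zeta>^b \<Longrightarrow> a = b"
proof -
  assume "a < N" "b < N" "\<zeta>^a = \<zeta>^b"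
  moreover have "inj_on (\<lambda>k. cis (2 * pi * real k / real N)) {..<N}"
    using bij_betw_roots_unity[OF N_pos] unfolding bij_betw_def by blast
  ultimately show "a = b" unfolding zeta_pow by (auto dest: inj_onD)
qed

lemma unity_root: "z^N = 1 \<Longrightarrow> \<exists>k<N. z = \<zeta>^k"
  using bij_betw_roots_unity[OF N_pos] unfolding bij_betw_def zeta_pow by (auto simp: image_iff)

lemma zeta_mod: "\<zeta>^(k mod N) = \<zeta>^k"
proof -
  have "\<zeta>^k = \<zeta>^(N * (k div N) + k mod N)" by simp
  also have "\<dots> = \<zeta>^(k mod N)" by (simp only: power_add power_mult zeta_N power_one mult_1)
  finally show ?thesis by (rule sym)
qed

lemma pow_eq: "s^N = t^N \<Longrightarrow> \<exists>k<N. s = \<zeta>^k * t"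
proof (cases "t = 0")
  case True
  assume "s^N = t^N" thus ?thesis using True N_pos by (intro exI[of _ 0]) (auto simp: power_0_left)
next
  case False
  assume "s^N = t^N"
  hence "(s/t)^N = 1" using False by (simp add: power_divide)
  then obtain k where "k<N" "s/t = \<zeta>^k" using unity_root by blast
  thus ?thesis using False by (intro exI[of _ k]) (auto simp: field_simps)
qed

lemma nth_root_ex: "\<exists>z::complex. z^N = c"
proof -
  have "c = 0 \<Longrightarrow> ?thesis" using N_pos by (intro exI[of _ 0]) auto
  moreover have "c \<noteq> 0 \<Longrightarrow> ?thesis"
  proof -
    assume "c \<noteq> 0"
    hence "card {z::complex. z^N = c} = N" using card_nth_roots N_pos by blast
    hence "{z::complex. z^N = c} \<noteq> {}" using N_pos by (metis card.empty less_irrefl)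
    thus ?thesis by blast
  qed
  ultimately show ?thesis by blast
qed

end


context osc begin

definition good :: "complex poly list \<Rightarrow> bool" where
  "good xs \<longleftrightarrow> is_dparam d xs \<and> monom 1 N dvd H_comp xs"

definition Y :: "complex poly list \<Rightarrow> nat \<Rightarrow> complex poly" where
  "Y xs i = xs!i + 1"

definition PP :: "complex poly list \<Rightarrow> complex poly" where
  "PP xs = prod_list (map (\<lambda>p. p + 1) xs)"

lemma good_len: "good xs \<Longrightarrow> length xs = n"
  by (simp add: good_def is_dparam_def)

lemma PP_nth: "length xs = n \<Longrightarrow> PP xs = (\<Prod>i<n. Y xs i)"
  by (simp add: PP_def Y_def prod_list_map_nth)

lemma poly_PP_eval: "poly (PP xs) t = prod_list (map (\<lambda>v. v + 1) (param_eval xs t))"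
  unfolding PP_def param_eval_def by (induction xs) auto

lemma poly_PP: "length xs = n \<Longrightarrow> poly (PP xs) t = (\<Prod>i<n. poly (Y xs i) t)"
  by (simp add: PP_nth poly_prod)

lemma good_Y_deg: "good xs \<Longrightarrow> i<n \<Longrightarrow> degree (Y xs i) = d!i"
proof -
  assume g: "good xs" and i: "i<n"
  hence "degree (xs!i) = d!i" by (simp add: good_def is_dparam_def)
  moreover have "d!i > 0" using dpos i by simp
  ultimately show ?thesis unfolding Y_def by (simp add: degree_add_eq_left)
qed

lemma good_Y0: "good xs \<Longrightarrow> i<n \<Longrightarrow> poly (Y xs i) 0 = 1"
  by (simp add: good_def is_dparam_def Y_def)

lemma good_Y_nz: "good xs \<Longrightarrow> i<n \<Longrightarrow> Y xs i \<noteq> 0"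
  using good_Y0 by fastforce

lemma good_deg_PP: "good xs \<Longrightarrow> degree (PP xs) = N"
  using good_Y_nz good_Y_deg good_len
  by (simp add: PP_nth degree_prod_eq_sum_degree N_sum)

lemma good_const: "good xs \<Longrightarrow> \<exists>c. c \<noteq> 0 \<and> (\<forall>t. poly (PP xs) t = 1 + c * t^N)"
proof -
  assume g: "good xs"
  have "monom 1 N dvd PP xs - 1" using g by (simp add: good_def H_comp_def PP_def)
  then obtain q where q: "PP xs - 1 = monom 1 N * q" by (elim dvdE)
  have dP: "degree (PP xs) = N" using good_deg_PP g .
  have "PP xs - 1 = PP xs + (-1)" by simp
  moreover have "degree (PP xs + (-1)) = N" using dP N_pos by (subst degree_add_eq_left) auto
  ultimately have "degree (PP xs - 1) = N" by simp
  hence qnz: "q \<noteq> 0" using q N_pos by auto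
  hence "degree (monom 1 N * q) = N + degree q"
    by (simp add: degree_mult_eq degree_monom_eq)
  hence "degree q = 0" using q \<open>degree (PP xs - 1) = N\<close> by simp
  hence qc: "q = [:coeff q 0:]" by (simp add: degree_0_id)
  have "coeff q 0 \<noteq> 0" using qnz qc by (metis pCons_0_0)
  moreover have "\<forall>t. poly (PP xs) t = 1 + coeff q 0 * t^N"
  proof
    fix t
    have "poly (PP xs - 1) t = poly (monom 1 N * q) t" by (simp add: q)
    also have "\<dots> = t^N * coeff q 0" by (subst qc) (simp add: poly_monom)
    finally show "poly (PP xs) t = 1 + coeff q 0 * t^N" by (simp add: algebra_simps)
  qed
  ultimately show ?thesis by blast
qed

definition cc :: "complex poly list \<Rightarrow> complex" where
  "cc xs = (SOME c. c \<noteq> 0 \<and> (\<forall>t. poly (PP xs) t = 1 + c * t^N))"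

lemma cc: "good xs \<Longrightarrow> cc xs \<noteq> 0 \<and> (\<forall>t. poly (PP xs) t = 1 + cc xs * t^N)"
  unfolding cc_def by (rule someI_ex) (rule good_const)

definition isroot :: "complex poly list \<Rightarrow> complex \<Rightarrow> bool" where
  "isroot xs r \<longleftrightarrow> poly (PP xs) r = 0"

lemma root_exists: "good xs \<Longrightarrow> \<exists>r. isroot xs r"
proof -
  assume g: "good xs"
  obtain z where z: "z^N = - 1 / cc xs" using nth_root_ex by blast
  have "poly (PP xs) z = 0" using cc[OF g] z by (simp add: field_simps)
  thus ?thesis unfolding isroot_def by blast
qed

lemma root_nz: "good xs \<Longrightarrow> isroot xs r \<Longrightarrow> r \<noteq> 0"
  using cc N_pos unfolding isroot_def by (auto simp: power_0_left)

lemma roots_char: "good xs \<Longrightarrow> isroot xs r \<Longrightarrow> isroot xs t \<longleftrightarrow> (\<exists>k<N. t = r*\<zeta>^k)"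
proof -
  assume g: "good xs" and r: "isroot xs r"
  have c: "cc xs \<noteq> 0" "\<And>t. poly (PP xs) t = 1 + cc xs * t^N" using cc[OF g] by auto
  have rN: "cc xs * r^N = -1" using r c unfolding isroot_def by (simp add: add_eq_0_iff)
  show ?thesis
  proof
    assume "isroot xs t"
    hence "cc xs * t^N = -1" using c unfolding isroot_def by (simp add: add_eq_0_iff)
    hence "t^N = r^N" using rN c(1) by (metis mult_left_cancel)
    then obtain k where "k<N" "t = \<zeta>^k * r" using pow_eq by blast
    thus "\<exists>k<N. t = r*\<zeta>^k" by (auto simp: mult.commute)
  next
    assume "\<exists>k<N. t = r*\<zeta>^k"
    then obtain k where "t = r*\<zeta>^k" by blast
    moreover have "(\<zeta>^k)^N = 1" by (metis power_mult mult.commute zeta_N power_one)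
    ultimately have "t^N = r^N" by (simp add: power_mult_distrib)
    thus "isroot xs t" using rN c unfolding isroot_def by simp
  qed
qed

lemma root_rot: "good xs \<Longrightarrow> isroot xs r \<Longrightarrow> isroot xs (r*\<zeta>^j)"
  using roots_char[of xs r "r*\<zeta>^j"] zeta_mod[of j] N_pos
  by (metis mod_less_divisor)

end


context osc begin

lemma count_key:
  assumes g: "good xs" and r: "isroot xs r"
  shows "\<forall>k<N. card {i. i<n \<and> poly (Y xs i) (r*\<zeta>^k) = 0} = 1"
    and "\<forall>i<n. card {k. k<N \<and> poly (Y xs i) (r*\<zeta>^k) = 0} = d!i"
proof -
  define Z where "Z k i \<longleftrightarrow> poly (Y xs i) (r*\<zeta>^k) = 0" for k i
  have ex: "\<exists>i<n. Z k i" if "k<N" for k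
  proof -
    have "isroot xs (r*\<zeta>^k)" using root_rot g r .
    hence "(\<Prod>i<n. poly (Y xs i) (r*\<zeta>^k)) = 0" using poly_PP good_len g unfolding isroot_def by simp
    thus ?thesis unfolding Z_def by auto
  qed
  have le: "card {k. k<N \<and> Z k i} \<le> d!i" if "i<n" for i
  proof -
    have "card {k. k<N \<and> Z k i} = card ((\<lambda>k. r*\<zeta>^k) ` {k. k<N \<and> Z k i})"
      using root_nz[OF g r] zeta_inj by (intro card_image[symmetric] inj_onI) auto
    also have "\<dots> \<le> card {x. poly (Y xs i) x = 0}"
      using good_Y_nz[OF g that] by (intro card_mono poly_roots_finite) (auto simp: Z_def)
    also have "\<dots> \<le> degree (Y xs i)" using card_poly_roots_bound good_Y_nz[OF g that] .
    finally show ?thesis using good_Y_deg[OF g that] by simp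
  qed
  have ge: "1 \<le> card {i. i<n \<and> Z k i}" if kN: "k<N" for k
  proof -
    obtain i where "i<n" "Z k i" using ex[OF kN] by blast
    hence "{i} \<subseteq> {i. i<n \<and> Z k i}" by auto
    hence "card {i} \<le> card {i. i<n \<and> Z k i}" by (intro card_mono) auto
    thus ?thesis by simp
  qed
  have swap: "(\<Sum>i<n. card {k. k<N \<and> Z k i}) = (\<Sum>k<N. card {i. i<n \<and> Z k i})"
    unfolding card_filter_sum by (rule sum.swap)
  have A: "N \<le> (\<Sum>k<N. card {i. i<n \<and> Z k i})"
  proof -
    have "N = (\<Sum>k<N. (1::nat))" by simp
    also have "\<dots> \<le> (\<Sum>k<N. card {i. i<n \<and> Z k i})" using ge by (intro sum_mono) auto
    finally show ?thesis .
  qed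
  have B0: "(\<Sum>i<n. card {k. k<N \<and> Z k i}) \<le> (\<Sum>i<n. d!i)"
    using le by (intro sum_mono) auto
  have B: "(\<Sum>i<n. card {k. k<N \<and> Z k i}) \<le> N"
    using B0 N_sum by simp
  show "\<forall>k<N. card {i. i<n \<and> poly (Y xs i) (r*\<zeta>^k) = 0} = 1"
  proof (intro allI impI)
    fix k assume k: "k<N"
    have "(\<lambda>_. 1) k = (\<lambda>k. card {i. i<n \<and> Z k i}) k"
      by (rule sum_eq_le_imp_eq[of "{..<N}"]) (use ge A B swap k in auto)
    thus "card {i. i<n \<and> poly (Y xs i) (r*\<zeta>^k) = 0} = 1" by (simp add: Z_def)
  qed
  show "\<forall>i<n. card {k. k<N \<and> poly (Y xs i) (r*\<zeta>^k) = 0} = d!i"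
  proof (intro allI impI)
    fix i assume i: "i<n"
    have "(\<lambda>i. card {k. k<N \<and> Z k i}) i = (\<lambda>i. d!i) i"
      by (rule sum_eq_le_imp_eq[of "{..<n}"]) (use le A B swap i N_sum in auto)
    thus "card {k. k<N \<and> poly (Y xs i) (r*\<zeta>^k) = 0} = d!i" by (simp add: Z_def)
  qed
qed

definition word :: "complex poly list \<Rightarrow> complex \<Rightarrow> nat list" where
  "word xs r = map (\<lambda>k. THE i. i<n \<and> poly (Y xs i) (r*\<zeta>^k) = 0) [0..<N]"

lemma word_len: "length (word xs r) = N"
  by (simp add: word_def)

lemma unique_i: "good xs \<Longrightarrow> isroot xs r \<Longrightarrow> k<N \<Longrightarrow> \<exists>!i. i<n \<and> poly (Y xs i) (r*\<zeta>^k) = 0"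
proof -
  assume "good xs" "isroot xs r" "k<N"
  hence "card {i. i<n \<and> poly (Y xs i) (r*\<zeta>^k) = 0} = 1" using count_key(1) by blast
  then obtain x where "{i. i<n \<and> poly (Y xs i) (r*\<zeta>^k) = 0} = {x}" by (elim card_1_singletonE)
  thus ?thesis by (metis (mono_tags, lifting) mem_Collect_eq singletonD singletonI)
qed

lemma word_nth: "good xs \<Longrightarrow> isroot xs r \<Longrightarrow> k<N \<Longrightarrow>
   word xs r ! k < n \<and> poly (Y xs (word xs r ! k)) (r*\<zeta>^k) = 0"
proof -
  assume a: "good xs" "isroot xs r" "k<N"
  have u: "\<exists>!i. i<n \<and> poly (Y xs i) (r*\<zeta>^k) = 0" using unique_i a by blast
  from theI'[OF u] show ?thesis using a(3) by (simp add: word_def)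
qed

lemma word_nth_iff: "good xs \<Longrightarrow> isroot xs r \<Longrightarrow> k<N \<Longrightarrow> i<n \<Longrightarrow>
   (word xs r ! k = i) \<longleftrightarrow> poly (Y xs i) (r*\<zeta>^k) = 0"
  using word_nth[of xs r k] unique_i[of xs r k] by blast

lemma word_count: "good xs \<Longrightarrow> isroot xs r \<Longrightarrow> i<n \<Longrightarrow> card {k. k<N \<and> word xs r ! k = i} = d!i"
proof -
  assume a: "good xs" "isroot xs r" "i<n"
  hence "{k. k<N \<and> word xs r ! k = i} = {k. k<N \<and> poly (Y xs i) (r*\<zeta>^k) = 0}"
    using word_nth_iff by blast
  thus ?thesis using count_key(2)[OF a(1,2)] a(3) by simp
qed

lemma word_dword: "good xs \<Longrightarrow> isroot xs r \<Longrightarrow> is_dword d (word xs r)"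
  unfolding is_dword_def
proof (intro conjI allI impI)
  assume a: "good xs" "isroot xs r"
  show "length (word xs r) = dsize d" by (simp add: word_len N_def)
  show "set (word xs r) \<subseteq> {..<n}"
    using word_nth[OF a] by (auto simp: in_set_conv_nth word_len)
  fix i assume "i<n"
  thus "count_list (word xs r) i = d!i"
    using word_count[OF a] by (simp add: count_list_card word_len)
qed

lemma word_rot: "word xs (r*\<zeta>^j) = rotate j (word xs r)"
proof (rule nth_equalityI)
  show "length (word xs (r*\<zeta>^j)) = length (rotate j (word xs r))" by (simp add: word_len)
  fix k assume "k < length (word xs (r*\<zeta>^j))"
  hence k: "k<N" by (simp add: word_len)
  have "rotate j (word xs r) ! k = word xs r ! ((j + k) mod N)"
    using k by (simp add: nth_rotate word_len)
  also have "\<dots> = (THE i. i<n \<and> poly (Y xs i) (r*\<zeta>^((j+k) mod N)) = 0)"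
    using N_pos by (simp add: word_def)
  also have "\<dots> = word xs (r*\<zeta>^j) ! k"
    using k by (simp add: word_def zeta_mod power_add mult.assoc)
  finally show "word xs (r*\<zeta>^j) ! k = rotate j (word xs r) ! k" by simp
qed

lemma Y_roots: "good xs \<Longrightarrow> isroot xs r \<Longrightarrow> i<n \<Longrightarrow>
   poly (Y xs i) t = 0 \<longleftrightarrow> (\<exists>k<N. t = r*\<zeta>^k \<and> word xs r ! k = i)"
proof
  assume a: "good xs" "isroot xs r" "i<n" and t: "poly (Y xs i) t = 0"
  have "(\<Prod>i<n. poly (Y xs i) t) = 0" using t a(3) by (intro prod_zero) auto
  hence "isroot xs t" using poly_PP good_len a unfolding isroot_def by simp
  then obtain k where k: "k<N" "t = r*\<zeta>^k" using roots_char a by blast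
  thus "\<exists>k<N. t = r*\<zeta>^k \<and> word xs r ! k = i" using word_nth_iff a t by blast
next
  assume a: "good xs" "isroot xs r" "i<n" and "\<exists>k<N. t = r*\<zeta>^k \<and> word xs r ! k = i"
  thus "poly (Y xs i) t = 0" using word_nth_iff by blast
qed

lemma determ:
  assumes g: "good xs" "good xs'" and r: "isroot xs r" "isroot xs' r'"
    and w: "word xs r = word xs' r'" and i: "i<n"
  shows "Y xs i = pcompose (Y xs' i) [:0, r'/r:]"
proof -
  have rnz: "r \<noteq> 0" "r' \<noteq> 0" using root_nz g r by auto
  define A where "A = (\<lambda>k. r*\<zeta>^k) ` {k. k<N \<and> word xs r ! k = i}"
  have cA: "card A = d!i" unfolding A_def
    using rnz zeta_inj word_count[OF g(1) r(1) i] by (subst card_image) (auto intro!: inj_onI)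
  show ?thesis
  proof (rule poly_eq_by_roots[of A])
    show "finite A" by (simp add: A_def)
    show "\<forall>a\<in>A. poly (Y xs i) a = 0" unfolding A_def using Y_roots[OF g(1) r(1) i] by auto
    show "\<forall>a\<in>A. poly (pcompose (Y xs' i) [:0, r'/r:]) a = 0"
    proof
      fix a assume "a \<in> A"
      then obtain k where k: "k<N" "word xs r ! k = i" "a = r*\<zeta>^k" unfolding A_def by auto
      have "poly (pcompose (Y xs' i) [:0, r'/r:]) a = poly (Y xs' i) (r'*\<zeta>^k)"
        using k rnz by (simp add: poly_pcompose mult.commute)
      also have "\<dots> = 0" using word_nth_iff[OF g(2) r(2) k(1) i] k w by simp
      finally show "poly (pcompose (Y xs' i) [:0, r'/r:]) a = 0" .
    qed
    show "card A = degree (Y xs i)" using cA good_Y_deg g i by simp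
    show "degree (pcompose (Y xs' i) [:0, r'/r:]) = degree (Y xs i)"
      using rnz good_Y_deg g i by (simp add: degree_pcompose)
    show "poly (Y xs i) 0 = poly (pcompose (Y xs' i) [:0, r'/r:]) 0"
      using good_Y0 g i by (simp add: poly_pcompose)
    show "poly (Y xs i) 0 \<noteq> 0" using good_Y0 g i by simp
  qed
qed

lemma determ_eval:
  assumes g: "good xs" "good xs'" and r: "isroot xs r" "isroot xs' r'"
    and w: "word xs r = word xs' r'"
  shows "param_eval xs t = param_eval xs' (r'/r * t)"
proof (rule nth_equalityI)
  show "length (param_eval xs t) = length (param_eval xs' (r'/r * t))"
    using good_len g by (simp add: param_eval_def)
  fix i assume "i < length (param_eval xs t)"
  hence i: "i<n" using good_len g by (simp add: param_eval_def)
  have "poly (Y xs i) t = poly (Y xs' i) (r'/r * t)"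
    using determ[OF g r w i] by (simp add: poly_pcompose field_simps)
  thus "param_eval xs t ! i = param_eval xs' (r'/r * t) ! i"
    using i good_len g by (simp add: param_eval_def Y_def)
qed

lemma determ_image:
  assumes g: "good xs" "good xs'" and r: "isroot xs r" "isroot xs' r'"
    and w: "word xs r = word xs' r'"
  shows "param_image xs = param_image xs'"
proof -
  have rnz: "r \<noteq> 0" "r' \<noteq> 0" using root_nz g r by auto
  have e: "\<And>t. param_eval xs t = param_eval xs' (r'/r * t)" using determ_eval[OF assms] .
  show ?thesis unfolding param_image_def
  proof
    show "range (param_eval xs) \<subseteq> range (param_eval xs')" using e by auto
    show "range (param_eval xs') \<subseteq> range (param_eval xs)"
    proof
      fix v assume "v \<in> range (param_eval xs')"
      then obtain s where s: "v = param_eval xs' s" by auto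
      have "v = param_eval xs (r/r' * s)" using e[of "r/r' * s"] s rnz by simp
      thus "v \<in> range (param_eval xs)" by auto
    qed
  qed
qed

end


definition prim :: "nat list \<Rightarrow> bool" where
  "prim w \<longleftrightarrow> (\<forall>j. 0<j \<and> j<length w \<longrightarrow> rotate j w \<noteq> w)"

context osc begin

lemma Y_comp_word:
  assumes "\<forall>i<n. Y xs i = pcompose (Y xs i) [:0, \<zeta>^j:]"
  shows "word xs (r*\<zeta>^j) = word xs r"
proof (rule nth_equalityI)
  show "length (word xs (r*\<zeta>^j)) = length (word xs r)" by (simp add: word_len)
  fix k assume "k < length (word xs (r*\<zeta>^j))"
  hence k: "k<N" by (simp add: word_len)
  have "(\<lambda>i. i<n \<and> poly (Y xs i) (r*\<zeta>^j*\<zeta>^k) = 0) = (\<lambda>i. i<n \<and> poly (Y xs i) (r*\<zeta>^k) = 0)"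
  proof (rule ext)
    fix i
    show "(i<n \<and> poly (Y xs i) (r*\<zeta>^j*\<zeta>^k) = 0) = (i<n \<and> poly (Y xs i) (r*\<zeta>^k) = 0)"
    proof (cases "i<n")
      case True
      hence "poly (Y xs i) (r*\<zeta>^k) = poly (pcompose (Y xs i) [:0, \<zeta>^j:]) (r*\<zeta>^k)"
        using assms by metis
      also have "\<dots> = poly (Y xs i) (r*\<zeta>^j*\<zeta>^k)" by (simp add: poly_pcompose mult_ac)
      finally show ?thesis by simp
    qed simp
  qed
  thus "word xs (r*\<zeta>^j) ! k = word xs r ! k" using k by (simp add: word_def)
qed

lemma infinite_complex: "infinite (UNIV :: complex set)"
  by (rule infinite_UNIV_char_0)

lemma P1:
  assumes g: "good xs" and r: "isroot xs r" and o: "one_fold xs"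
  shows "prim (word xs r)"
  unfolding prim_def
proof (intro allI impI notI)
  fix j assume j: "0<j \<and> j<length (word xs r)" and rot: "rotate j (word xs r) = word xs r"
  have jN: "0<j" "j<N" using j by (auto simp: word_len)
  have w: "word xs r = word xs (r*\<zeta>^j)" using rot word_rot by simp
  have rnz: "r \<noteq> 0" using root_nz g r by auto
  have e: "\<And>t. param_eval xs t = param_eval xs (\<zeta>^j * t)"
    using determ_eval[OF g g r root_rot[OF g r] w] rnz by simp
  obtain S where S: "finite S" "\<And>t s. t \<notin> S \<Longrightarrow> param_eval xs s = param_eval xs t \<Longrightarrow> s = t"
    using o unfolding one_fold_def by blast
  obtain t where t: "t \<notin> insert 0 S" using ex_new_if_finite[OF infinite_complex] S(1) by blast
  have "\<zeta>^j * t = t" using S(2)[of t "\<zeta>^j * t"] e[of t] t by simp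
  hence "\<zeta>^j = \<zeta>^0" using t by simp
  hence "j = 0" using zeta_inj jN N_pos by blast
  thus False using jN by simp
qed

lemma P2:
  assumes g: "good xs" and r: "isroot xs r" and p: "prim (word xs r)"
  shows "one_fold xs"
proof -
  define D where "D j i = pcompose (Y xs i) [:0, \<zeta>^j:] - Y xs i" for j i
  have nz: "\<exists>i<n. D j i \<noteq> 0" if j: "0<j" "j<N" for j
  proof (rule ccontr)
    assume "\<not> (\<exists>i<n. D j i \<noteq> 0)"
    hence "\<forall>i<n. Y xs i = pcompose (Y xs i) [:0, \<zeta>^j:]" by (auto simp: D_def)
    hence "word xs (r*\<zeta>^j) = word xs r" by (rule Y_comp_word)
    hence "rotate j (word xs r) = word xs r" using word_rot by simp
    thus False using p j unfolding prim_def by (auto simp: word_len)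
  qed
  define S where "S = (\<Union>j\<in>{0<..<N}. \<Union>i\<in>{i. i<n \<and> D j i \<noteq> 0}. {t. poly (D j i) t = 0})"
  have fS: "finite S" unfolding S_def by (intro finite_UN_I) (auto intro: poly_roots_finite)
  have c: "cc xs \<noteq> 0" "\<And>t. poly (PP xs) t = 1 + cc xs * t^N" using cc[OF g] by auto
  have "\<forall>t s. t \<notin> S \<longrightarrow> param_eval xs s = param_eval xs t \<longrightarrow> s = t"
  proof (intro allI impI)
    fix t s assume tS: "t \<notin> S" and e: "param_eval xs s = param_eval xs t"
    have Yi: "poly (Y xs i) s = poly (Y xs i) t" if "i<n" for i
    proof -
      have "param_eval xs s ! i = param_eval xs t ! i" using e by simp
      thus ?thesis using that good_len[OF g] by (simp add: param_eval_def Y_def)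
    qed
    have "poly (PP xs) s = poly (PP xs) t" using e by (simp add: poly_PP_eval)
    hence "s^N = t^N" using c by simp
    then obtain j where j: "j<N" "s = \<zeta>^j * t" using pow_eq by blast
    show "s = t"
    proof (cases "j = 0")
      case True thus ?thesis using j by simp
    next
      case False
      then obtain i where i: "i<n" "D j i \<noteq> 0" using nz j by blast
      have "poly (D j i) t = poly (Y xs i) s - poly (Y xs i) t"
        using j by (simp add: D_def poly_pcompose mult.commute)
      also have "\<dots> = 0" using Yi i by simp
      finally have "t \<in> S" unfolding S_def using i j False by auto
      thus ?thesis using tS by simp
    qed
  qed
  thus ?thesis unfolding one_fold_def using fS by blast
qed

lemma pigeon:
  assumes g: "good xs" "good xs'" and sub: "param_image xs' \<subseteq> param_image xs"
  shows "\<exists>\<mu>. \<mu> \<noteq> 0 \<and> (\<forall>t. param_eval xs' t = param_eval xs (\<mu>*t))"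
proof -
  have c: "cc xs \<noteq> 0" "\<And>t. poly (PP xs) t = 1 + cc xs * t^N" using cc[OF g(1)] by auto
  have c': "cc xs' \<noteq> 0" "\<And>t. poly (PP xs') t = 1 + cc xs' * t^N" using cc[OF g(2)] by auto
  obtain l where l: "l^N = cc xs' / cc xs" using nth_root_ex by blast
  have lnz: "l \<noteq> 0" using l c c' N_pos by (auto simp: power_0_left)
  define E where "E j = {s. param_eval xs' s = param_eval xs (\<zeta>^j*l*s)}" for j
  have cov: "\<exists>j<N. s \<in> E j" for s
  proof -
    have "param_eval xs' s \<in> param_image xs" using sub by (auto simp: param_image_def)
    then obtain t where t: "param_eval xs' s = param_eval xs t" by (auto simp: param_image_def)
    have "poly (PP xs') s = poly (PP xs) t" using t by (simp add: poly_PP_eval)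
    hence "cc xs' * s^N = cc xs * t^N" using c c' by simp
    moreover have "cc xs * (l*s)^N = cc xs' * s^N"
    proof -
      have "cc xs * (l*s)^N = (cc xs * l^N) * s^N" by (simp add: power_mult_distrib mult_ac)
      also have "cc xs * l^N = cc xs'" using l c(1) by simp
      finally show ?thesis .
    qed
    ultimately have "cc xs * t^N = cc xs * (l*s)^N" by (simp only:)
    hence "t^N = (l*s)^N" using c(1) by (metis mult_left_cancel)
    then obtain j where "j<N" "t = \<zeta>^j * (l*s)" using pow_eq by blast
    thus ?thesis using t by (auto simp: E_def mult.assoc)
  qed
  have "\<exists>j<N. infinite (E j)"
  proof (rule ccontr)
    assume "\<not> (\<exists>j<N. infinite (E j))"
    hence "finite (\<Union>j<N. E j)" by auto
    moreover have "(\<Union>j<N. E j) = UNIV" using cov by blast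
    ultimately show False using infinite_complex by simp
  qed
  then obtain j where j: "j<N" "infinite (E j)" by blast
  define \<mu> where "\<mu> = \<zeta>^j*l"
  have mnz: "\<mu> \<noteq> 0" using lnz zeta_nz by (simp add: \<mu>_def)
  have eqi: "xs'!i = pcompose (xs!i) [:0, \<mu>:]" if i: "i<n" for i
  proof (rule ccontr)
    assume "xs'!i \<noteq> pcompose (xs!i) [:0, \<mu>:]"
    hence nz: "xs'!i - pcompose (xs!i) [:0, \<mu>:] \<noteq> 0" by simp
    have "E j \<subseteq> {s. poly (xs'!i - pcompose (xs!i) [:0, \<mu>:]) s = 0}"
    proof
      fix s assume "s \<in> E j"
      hence "param_eval xs' s ! i = param_eval xs (\<mu>*s) ! i" by (simp add: E_def \<mu>_def)
      thus "s \<in> {s. poly (xs'!i - pcompose (xs!i) [:0, \<mu>:]) s = 0}"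
        using i good_len g by (simp add: param_eval_def poly_pcompose mult.commute)
    qed
    thus False using poly_roots_finite[OF nz] j(2) finite_subset by blast
  qed
  have "\<forall>t. param_eval xs' t = param_eval xs (\<mu>*t)"
  proof
    fix t show "param_eval xs' t = param_eval xs (\<mu>*t)"
      using eqi good_len g by (intro nth_equalityI) (auto simp: param_eval_def poly_pcompose mult.commute)
  qed
  thus ?thesis using mnz by blast
qed

lemma word_scale:
  assumes "\<forall>i<n. \<forall>t. poly (Y xs' i) t = poly (Y xs i) (\<mu>*t)"
  shows "word xs' r' = word xs (\<mu>*r')"
proof (rule nth_equalityI)
  show "length (word xs' r') = length (word xs (\<mu>*r'))" by (simp add: word_len)
  fix k assume "k < length (word xs' r')"
  hence k: "k<N" by (simp add: word_len)
  have "(\<lambda>i. i<n \<and> poly (Y xs' i) (r'*\<zeta>^k) = 0) = (\<lambda>i. i<n \<and> poly (Y xs i) (\<mu>*r'*\<zeta>^k) = 0)"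
    using assms by (auto simp: mult.assoc)
  thus "word xs' r' ! k = word xs (\<mu>*r') ! k" using k by (simp add: word_def)
qed

end


lemma rot_orbit_rotate: "rot_orbit (rotate j w) = rot_orbit w"
proof (cases "w = []")
  case True thus ?thesis by simp
next
  case False
  define L where "L = length w"
  have L: "L > 0" using False by (simp add: L_def)
  show ?thesis unfolding rot_orbit_def
  proof (intro set_eqI iffI)
    fix v assume "v \<in> {rotate k (rotate j w) |k. True}"
    thus "v \<in> {rotate k w |k. True}" by (auto simp: rotate_rotate)
  next
    fix v assume "v \<in> {rotate k w |k. True}"
    then obtain k where v: "v = rotate k w" by auto
    have "rotate (k + (L - j mod L)) (rotate j w) = rotate (k + (L - j mod L) + j) w"
      by (simp add: rotate_rotate)
    also have "\<dots> = rotate ((k + (L - j mod L) + j) mod L) w"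
      by (subst rotate_conv_mod) (simp add: L_def)
    also have "(k + (L - j mod L) + j) mod L = k mod L"
    proof -
      have eq: "k + (L - j mod L) + j = k + L + L * (j div L)"
        using mult_div_mod_eq[of L j] mod_less_divisor[OF L, of j] by linarith
      show ?thesis by (subst eq) simp
    qed
    also have "rotate (k mod L) w = rotate k w" by (simp add: L_def rotate_conv_mod[symmetric])
    finally have "v = rotate (k + (L - j mod L)) (rotate j w)" using v by simp
    thus "v \<in> {rotate k (rotate j w) |k. True}" by blast
  qed
qed

lemma count_list_rotate: "count_list (rotate j w) i = count_list w i"
proof -
  have "count_list (take (j mod length w) w) i + count_list (drop (j mod length w) w) i = count_list w i"
    by (metis append_take_drop_id count_list_append)
  thus ?thesis by (simp add: rotate_drop_take add.commute)
qed

lemma dword_rotate: "is_dword d w \<Longrightarrow> is_dword d (rotate j w)"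
  by (simp add: is_dword_def count_list_rotate)

lemma rot_orbit_img: "length w > 0 \<Longrightarrow> rot_orbit w = (\<lambda>k. rotate k w) ` {..<length w}"
  unfolding rot_orbit_def
  by (auto simp: image_iff intro: exI[of _ "_ mod length w"] rotate_conv_mod)

lemma prim_card: "length w > 0 \<Longrightarrow> card (rot_orbit w) = length w \<longleftrightarrow> prim w"
proof -
  assume L: "length w > 0"
  have "card (rot_orbit w) = length w \<longleftrightarrow> inj_on (\<lambda>k. rotate k w) {..<length w}"
    using inj_on_iff_eq_card[of "{..<length w}" "\<lambda>k. rotate k w"] rot_orbit_img[OF L] by simp
  also have "\<dots> \<longleftrightarrow> prim w"
  proof
    assume inj: "inj_on (\<lambda>k. rotate k w) {..<length w}"
    show "prim w" unfolding prim_def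
    proof (intro allI impI)
      fix j assume j: "0<j \<and> j<length w"
      show "rotate j w \<noteq> w"
      proof
        assume "rotate j w = w"
        hence "rotate j w = rotate 0 w" by simp
        hence "j = 0" using inj_onD[OF inj, of j 0] j L by simp
        thus False using j by simp
      qed
    qed
  next
    assume p: "prim w"
    show "inj_on (\<lambda>k. rotate k w) {..<length w}"
    proof (rule inj_onI, rule ccontr)
      have main: "False" if ab: "a < b" "b < length w" "rotate a w = rotate b w" for a b
      proof -
        have e1: "rotate (length w - a) (rotate a w) = w" using ab(1,2) by (simp add: rotate_rotate)
        have e2: "rotate (length w - a) (rotate b w) = rotate (b - a) w"
        proof -
          have "rotate (length w - a) (rotate b w) = rotate (length w - a + b) w" by (simp add: rotate_rotate)
          also have "length w - a + b = (b - a) + length w" using ab by simp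
          also have "rotate ((b - a) + length w) w = rotate (b - a) w"
            by (metis rotate_conv_mod mod_add_self2)
          finally show ?thesis .
        qed
        have "w = rotate (b - a) w" using e1 e2 ab(3) by simp
        moreover have "0 < b - a \<and> b - a < length w" using ab by simp
        ultimately show False using p unfolding prim_def by metis
      qed
      fix a b assume "a \<in> {..<length w}" "b \<in> {..<length w}" "rotate a w = rotate b w" "a \<noteq> b"
      thus False using main[of a b] main[of b a] by (cases "a < b") auto
    qed
  qed
  finally show ?thesis .
qed



context osc begin

definition Xy :: "nat list \<Rightarrow> nat \<Rightarrow> complex poly" where
  "Xy w i = (\<Prod>k\<in>{k. k<N \<and> w!k = i}. [:1, - inverse (\<zeta>^k):])"

definition X :: "nat list \<Rightarrow> complex poly list" where
  "X w = map (\<lambda>i. Xy w i - 1) [0..<n]"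

lemma X_len: "length (X w) = n" by (simp add: X_def)

lemma Y_X: "i<n \<Longrightarrow> Y (X w) i = Xy w i" by (simp add: X_def Y_def)

lemma poly_Xy: "poly (Xy w i) t = (\<Prod>k\<in>{k. k<N \<and> w!k = i}. 1 - inverse (\<zeta>^k) * t)"
  by (simp add: Xy_def poly_prod algebra_simps)

lemma Xy0: "poly (Xy w i) 0 = 1" by (simp add: poly_Xy)

lemma Xy_nz: "Xy w i \<noteq> 0" using Xy0[of w i] by auto

lemma Xy_deg: "degree (Xy w i) = card {k. k<N \<and> w!k = i}"
  unfolding Xy_def using zeta_nz by (subst degree_prod_eq_sum_degree) auto

lemma Xy_root: "k<N \<Longrightarrow> poly (Xy w i) (\<zeta>^k) = 0 \<longleftrightarrow> w!k = i"
proof -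
  assume k: "k<N"
  have "poly (Xy w i) (\<zeta>^k) = 0 \<longleftrightarrow> (\<exists>k'\<in>{k. k<N \<and> w!k = i}. 1 - inverse (\<zeta>^k') * \<zeta>^k = 0)"
    unfolding poly_Xy by (simp add: prod_zero_iff)
  also have "\<dots> \<longleftrightarrow> (\<exists>k'. k'<N \<and> w!k' = i \<and> \<zeta>^k = \<zeta>^k')"
    using zeta_nz by (auto simp: field_simps)
  also have "\<dots> \<longleftrightarrow> w!k = i" using k zeta_inj by blast
  finally show ?thesis .
qed

lemma dword_card: "is_dword d w \<Longrightarrow> i<n \<Longrightarrow> card {k. k<N \<and> w!k = i} = d!i"
  unfolding is_dword_def by (metis count_list_card N_def)

lemma dword_nth: "is_dword d w \<Longrightarrow> k<N \<Longrightarrow> w!k < n"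
  unfolding is_dword_def N_def by (metis lessThan_iff nth_mem subsetD)

lemma PP_X: "is_dword d w \<Longrightarrow> PP (X w) = 1 + monom (-1) N"
proof -
  assume w: "is_dword d w"
  let ?A = "(\<lambda>k. \<zeta>^k) ` {..<N}"
  have degPP: "degree (PP (X w)) = N"
    using Xy_nz dword_card[OF w] by (simp add: PP_nth X_len Y_X degree_prod_eq_sum_degree Xy_deg N_sum)
  have degQ: "degree (1 + monom (-1) N :: complex poly) = N"
    using N_pos by (subst degree_add_eq_right) (auto simp: degree_monom_eq)
  show ?thesis
  proof (rule poly_eq_by_roots[of ?A])
    show "finite ?A" by simp
    show "\<forall>a\<in>?A. poly (PP (X w)) a = 0"
    proof
      fix a assume "a \<in> ?A"
      then obtain k where k: "k<N" "a = \<zeta>^k" by auto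
      have "w!k < n" using dword_nth w k by simp
      moreover have "poly (Y (X w) (w!k)) a = 0" using k Xy_root Y_X dword_nth w by simp
      ultimately show "poly (PP (X w)) a = 0"
        by (simp add: poly_PP X_len) blast
    qed
    show "\<forall>a\<in>?A. poly (1 + monom (-1) N) a = 0"
    proof
      fix a assume "a \<in> ?A"
      then obtain k where k: "a = \<zeta>^k" by auto
      have "a^N = 1" using k by (metis power_mult mult.commute zeta_N power_one)
      thus "poly (1 + monom (-1) N) a = 0" by (simp add: poly_monom)
    qed
    show "card ?A = degree (PP (X w))" using degPP zeta_inj
      by (subst card_image) (auto intro: inj_onI)
    show "degree (1 + monom (-1) N :: complex poly) = degree (PP (X w))" by (simp only: degPP degQ)
    show "poly (PP (X w)) 0 = poly (1 + monom (-1) N) 0"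
      using N_pos by (simp add: poly_PP X_len Y_X Xy0 poly_monom)
    show "poly (PP (X w)) 0 \<noteq> 0" by (simp add: poly_PP X_len Y_X Xy0)
  qed
qed

lemma X_good: "is_dword d w \<Longrightarrow> good (X w)"
proof -
  assume w: "is_dword d w"
  have "is_dparam d (X w)" unfolding is_dparam_def
  proof (intro conjI allI impI)
    show "length (X w) = n" by (simp add: X_len)
    fix i assume i: "i<n"
    have "degree (Xy w i) = d!i" using Xy_deg dword_card[OF w i] by simp
    moreover have "d!i > 0" using dpos i by simp
    moreover have "Xy w i - 1 = Xy w i + (-1)" by simp
    ultimately have "degree (Xy w i - 1) = d!i" by (metis degree_add_eq_left degree_1 degree_minus)
    thus "degree (X w ! i) = d!i" using i by (simp add: X_def)
    show "poly (X w ! i) 0 = 0" using i by (simp add: X_def Xy0)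
  qed
  moreover have "H_comp (X w) = monom (-1) N"
    using PP_X[OF w] by (simp add: H_comp_def PP_def[symmetric])
  moreover have "monom (1::complex) N dvd monom (-1) N"
    by (rule dvdI[of _ _ "[:-1:]"]) (simp add: monom_altdef)
  ultimately show ?thesis by (simp add: good_def)
qed

lemma X_root1: "is_dword d w \<Longrightarrow> isroot (X w) 1"
  using PP_X by (simp add: isroot_def poly_monom)

lemma X_word: "is_dword d w \<Longrightarrow> word (X w) 1 = w"
proof (rule nth_equalityI)
  assume w: "is_dword d w"
  show "length (word (X w) 1) = length w" using w by (simp add: word_len is_dword_def N_def)
  fix k assume "k < length (word (X w) 1)"
  hence k: "k<N" by (simp add: word_len)
  have "word (X w) 1 ! k = w!k \<longleftrightarrow> poly (Y (X w) (w!k)) (1*\<zeta>^k) = 0"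
    using word_nth_iff[OF X_good[OF w] X_root1[OF w] k dword_nth[OF w k]] .
  thus "word (X w) 1 ! k = w ! k" using Y_X dword_nth[OF w k] Xy_root[OF k] by simp
qed

end


context osc begin

lemma Osc_eq: "H_osculants d = {param_image xs | xs. good xs \<and> one_fold xs}"
  unfolding H_osculants_def good_def N_def by blast

lemma rep:
  assumes "Q \<in> primitive_necklaces d"
  shows "(SOME w. w \<in> Q) \<in> Q \<and> is_dword d (SOME w. w \<in> Q) \<and>
         rot_orbit (SOME w. w \<in> Q) = Q \<and> prim (SOME w. w \<in> Q)"
proof -
  obtain w0 where w0: "Q = rot_orbit w0" "is_dword d w0" "card (rot_orbit w0) = dsize d"
    using assms unfolding primitive_necklaces_def by blast
  have "w0 \<in> Q" using w0(1) unfolding rot_orbit_def by (auto intro: exI[of _ 0])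
  hence "(SOME w. w \<in> Q) \<in> Q" by (rule someI)
  then obtain j where j: "(SOME w. w \<in> Q) = rotate j w0" using w0(1) unfolding rot_orbit_def by blast
  have dw: "is_dword d (SOME w. w \<in> Q)" using j dword_rotate w0(2) by simp
  have ro: "rot_orbit (SOME w. w \<in> Q) = Q" using j rot_orbit_rotate w0(1) by simp
  have len: "length (SOME w. w \<in> Q) = N" using dw by (simp add: is_dword_def N_def)
  have lp: "length (SOME w. w \<in> Q) > 0" using len N_pos by simp
  have "prim (SOME w. w \<in> Q)" using prim_card[OF lp] len ro w0(1) w0(3) N_def by simp
  thus ?thesis using \<open>(SOME w. w \<in> Q) \<in> Q\<close> dw ro by blast
qed

lemma main: "\<exists>\<phi>. bij_betw \<phi> (H_osculants d) (primitive_necklaces d)"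
proof -
  define \<psi> where "\<psi> Q = param_image (X (SOME w. w \<in> Q))" for Q :: "nat list set"
  have inj: "inj_on \<psi> (primitive_necklaces d)"
  proof (rule inj_onI)
    fix Q1 Q2 assume Q1: "Q1 \<in> primitive_necklaces d" and Q2: "Q2 \<in> primitive_necklaces d"
      and eq: "\<psi> Q1 = \<psi> Q2"
    define w1 where "w1 = (SOME w. w \<in> Q1)"
    define w2 where "w2 = (SOME w. w \<in> Q2)"
    have r1: "is_dword d w1" "rot_orbit w1 = Q1" using rep[OF Q1] unfolding w1_def by auto
    have r2: "is_dword d w2" "rot_orbit w2 = Q2" using rep[OF Q2] unfolding w2_def by auto
    have g1: "good (X w1)" and g2: "good (X w2)" using X_good r1 r2 by auto
    have "param_image (X w2) \<subseteq> param_image (X w1)" using eq by (simp add: \<psi>_def w1_def w2_def)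
    then obtain \<mu> where mu: "\<mu> \<noteq> 0" "\<And>t. param_eval (X w2) t = param_eval (X w1) (\<mu>*t)"
      using pigeon[OF g1 g2] by blast
    have Yeq: "\<forall>i<n. \<forall>t. poly (Y (X w2) i) t = poly (Y (X w1) i) (\<mu>*t)"
    proof (intro allI impI)
      fix i t assume i: "i<n"
      have "param_eval (X w2) t ! i = param_eval (X w1) (\<mu>*t) ! i" using mu by simp
      thus "poly (Y (X w2) i) t = poly (Y (X w1) i) (\<mu>*t)"
        using i by (simp add: param_eval_def X_len Y_def)
    qed
    have ws: "word (X w2) 1 = word (X w1) (\<mu>*1)" using word_scale[OF Yeq] .
    have "poly (PP (X w1)) \<mu> = poly (PP (X w2)) 1" using mu(2)[of 1] by (simp add: poly_PP_eval)
    hence "isroot (X w1) \<mu>" using X_root1[OF r2(1)] by (simp add: isroot_def)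
    then obtain j where "j<N" "\<mu> = 1*\<zeta>^j" using roots_char[OF g1 X_root1[OF r1(1)]] by blast
    hence "w2 = rotate j w1" using ws X_word r1 r2 word_rot[of "X w1" 1 j] by simp
    thus "Q1 = Q2" using r1 r2 rot_orbit_rotate by metis
  qed
  have img: "\<psi> ` primitive_necklaces d = H_osculants d"
  proof
    show "\<psi> ` primitive_necklaces d \<subseteq> H_osculants d"
    proof
      fix C assume "C \<in> \<psi> ` primitive_necklaces d"
      then obtain Q where Q: "Q \<in> primitive_necklaces d" "C = \<psi> Q" by blast
      define w where "w = (SOME w. w \<in> Q)"
      have r: "is_dword d w" "prim w" using rep[OF Q(1)] unfolding w_def by auto
      have "one_fold (X w)" using P2[OF X_good[OF r(1)] X_root1[OF r(1)]] X_word[OF r(1)] r(2) by simp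
      thus "C \<in> H_osculants d" unfolding Osc_eq using Q(2) X_good[OF r(1)]
        by (auto simp: \<psi>_def w_def)
    qed
  next
    show "H_osculants d \<subseteq> \<psi> ` primitive_necklaces d"
    proof
      fix C assume "C \<in> H_osculants d"
      then obtain xs where xs: "C = param_image xs" "good xs" "one_fold xs" unfolding Osc_eq by blast
      obtain r where r: "isroot xs r" using root_exists xs(2) by blast
      define w0 where "w0 = word xs r"
      have dw0: "is_dword d w0" using word_dword xs(2) r by (simp add: w0_def)
      have pw0: "prim w0" using P1 xs r by (simp add: w0_def)
      have "card (rot_orbit w0) = dsize d"
        using prim_card[of w0] pw0 word_len N_pos N_def by (simp add: w0_def)
      hence Q: "rot_orbit w0 \<in> primitive_necklaces d" using dw0 unfolding primitive_necklaces_def by blast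
      define w where "w = (SOME w. w \<in> rot_orbit w0)"
      have "w \<in> rot_orbit w0" and dw: "is_dword d w" using rep[OF Q] unfolding w_def by auto
      then obtain j where "w = rotate j w0" unfolding rot_orbit_def by blast
      hence wj: "w = word xs (r*\<zeta>^j)" using word_rot by (simp add: w0_def)
      have "param_image (X w) = param_image xs"
        using determ_image[OF X_good[OF dw] xs(2) X_root1[OF dw] root_rot[OF xs(2) r]] X_word[OF dw] wj
        by simp
      hence "\<psi> (rot_orbit w0) = C" using xs(1) by (simp add: \<psi>_def w_def)
      thus "C \<in> \<psi> ` primitive_necklaces d" using Q by blast
    qed
  qed
  have "bij_betw \<psi> (primitive_necklaces d) (H_osculants d)" using inj img by (simp add: bij_betw_def)
  thus ?thesis using bij_betw_inv_into by blast
qed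

end

theorem theorem3p6:
  fixes d :: "nat list"
  assumes "\<forall>i < length d. d ! i > 0"
  shows "\<exists>\<phi>. bij_betw \<phi> (H_osculants d) (primitive_necklaces d)"
proof (cases "d = []")
  case False
  interpret osc d using False assms by unfold_locales
  show ?thesis by (rule main)
next
  case True
  have "H_osculants d = {}"
  proof -
    have "\<not> one_fold []"
    proof
      assume "one_fold []"
      then obtain S where S: "finite S" "\<forall>t s. t \<notin> S \<longrightarrow> param_eval [] s = param_eval [] t \<longrightarrow> s = t"
        unfolding one_fold_def by blast
      obtain t :: complex where "t \<notin> S" using ex_new_if_finite[OF infinite_UNIV_char_0 S(1)] by blast
      hence "\<forall>s. s = t" using S(2) by (simp add: param_eval_def)
      hence "t + 1 = t" by blast
      thus False by simp
    qed
    moreover have "is_dparam [] xs \<Longrightarrow> xs = []" for xs by (simp add: is_dparam_def)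
    ultimately show ?thesis unfolding H_osculants_def True by auto
  qed
  moreover have "primitive_necklaces d = {}"
  proof -
    have "is_dword [] w \<Longrightarrow> w = []" for w by (simp add: is_dword_def dsize_def)
    moreover have "card (rot_orbit ([]::nat list)) = 1" by (simp add: rot_orbit_def)
    ultimately have "\<not> (is_dword [] w \<and> card (rot_orbit w) = dsize [])" for w
      by (metis dsize_def sum_list.Nil zero_neq_one)
    thus ?thesis unfolding primitive_necklaces_def True by blast
  qed
  moreover have "bij_betw (\<lambda>x::complex list set. ({}::nat list set)) {} {}" by (simp add: bij_betw_def)
  ultimately show ?thesis by metis
qed


end
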